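(* Let $\mathcal{F}$ be a fundamental polygon for a discrete subgroup $\Gamma\leq\mathrm{PSL}_2(\mathbb{R})$ of finite covolume, and let $I,J$ be disjoint, non-empty, open, connected subsegments of $\partial\mathcal{F}$ such that no endpoint of $I$ lies on the same edge of $\mathcal{F}$ as an endpoint of $J$. Then $d_{I,J}>0$.
   Context: A fundamental polygon is an open convex $\mathcal{F}\subset\mathbb{H}$ whose closure is a convex hyperbolic polygon with finitely many geodesic sides, every point of $\mathbb{H}$ $\Gamma$-equivalent to a point of $\overline{\mathcal{F}}$, distinct $\Gamma$-equivalent points of $\overline{\mathcal{F}}$ lying on $\partial\mathcal{F}$; its edges are the maximal geodesic segments of $\partial\mathcal{F}$. Orient $\partial\mathcal{F}$ positively (with $\mathcal{F}$ on the left). Let $z_0\in\overline I$, $z_1\in\overline J$ be the endpoints such that the open arc of $\partial\mathcal{F}$ running positively from $z_1$ to $z_0$ is disjoint from $I\cup J$. Let $S$ be the complete geodesic through $z_0,z_1$ oriented from $z_0$ to $z_1$, with backward endpoint $x_0$ and forward endpoint $x_1$; take $\sigma\in\mathrm{PSL}_2(\mathbb{R})$ with $\sigma S=i\mathbb{R}$, $\sigma x_0=\infty$, $\sigma x_1=0$, and $\tilde B=\sigma^{-1}\{\Re z\geq0\}$. Then $\mathcal{P}_{I,J}=\tilde B\cap\mathcal{F}$ and $d_{I,J}$ is its hyperbolic area (measure $dx\,dy/y^2$). *)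

theory Defs
  imports "HOL-Analysis.Analysis"
begin

definition UHP :: "complex set" where
  "UHP = {z. Im z > 0}"

type_synonym mat2 = "real^2^2"

definition SL2 :: "mat2 set" where
  "SL2 = {M. det M = 1}"

text \<open>A subgroup of PSL2(R)
  is represented by a subgroup of SL2(R) (e.g. its full preimage); the action and
  discreteness do not depend on this choice.\<close>
definition mob :: "mat2 \<Rightarrow> complex \<Rightarrow> complex" where
  "mob M z = (of_real (M$1$1) * z + of_real (M$1$2)) / (of_real (M$2$1) * z + of_real (M$2$2))"

definition subgroup_SL2 :: "mat2 set \<Rightarrow> bool" where
  "subgroup_SL2 G \<longleftrightarrow> G \<subseteq> SL2 \<and> mat 1 \<in> G \<and>
     (\<forall>g\<in>G. \<forall>h\<in>G. g ** h \<in> G) \<and> (\<forall>g\<in>G. matrix_inv g \<in> G)"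

definition discrete_subgroup :: "mat2 set \<Rightarrow> bool" where
  "discrete_subgroup G \<longleftrightarrow> subgroup_SL2 G \<and>
     (\<forall>g\<in>G. \<exists>e>0. \<forall>h\<in>G. dist h g < e \<longrightarrow> h = g)"

definition hyp_area :: "complex set \<Rightarrow> ennreal" where
  "hyp_area S = (\<integral>\<^sup>+ z. ennreal (indicator S z / (Im z)^2) \<partial>lborel)"

text \<open>Every complete geodesic is the preimage of the imaginary axis under some
  element of PSL2(R), every hyperbolic half plane the preimage of a right half plane.\<close>
definition geodesic_line :: "mat2 \<Rightarrow> complex set" where
  "geodesic_line M = {z \<in> UHP. Re (mob M z) = 0}"

definition open_hp :: "mat2 \<Rightarrow> complex set" where
  "open_hp M = {z \<in> UHP. Re (mob M z) > 0}"

definition closed_hp :: "mat2 \<Rightarrow> complex set" where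
  "closed_hp M = {z \<in> UHP. Re (mob M z) \<ge> 0}"

definition Fbar :: "complex set \<Rightarrow> complex set" where
  "Fbar F = closure F \<inter> UHP"

definition bdF :: "complex set \<Rightarrow> complex set" where
  "bdF F = Fbar F - F"

text \<open>An open convex F whose closure is a convex hyperbolic polygon with finitely many
  geodesic sides is exactly a non-empty finite intersection of open hyperbolic half planes.\<close>
definition fundamental_polygon :: "mat2 set \<Rightarrow> complex set \<Rightarrow> bool" where
  "fundamental_polygon G F \<longleftrightarrow>
     F \<noteq> {} \<and>
     (\<exists>Ms. finite Ms \<and> Ms \<subseteq> SL2 \<and> F = UHP \<inter> \<Inter>(open_hp ` Ms)) \<and>
     (\<forall>z\<in>UHP. \<exists>g\<in>G. mob g z \<in> Fbar F) \<and>
     (\<forall>z\<in>Fbar F. \<forall>w\<in>Fbar F. z \<noteq> w \<and> (\<exists>g\<in>G. mob g z = w) \<longrightarrow> z \<in> bdF F \<and> w \<in> bdF F)"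

definition geodesic_subset :: "complex set \<Rightarrow> bool" where
  "geodesic_subset E \<longleftrightarrow> (\<exists>M\<in>SL2. E \<subseteq> geodesic_line M)"

definition is_edge :: "complex set \<Rightarrow> complex set \<Rightarrow> bool" where
  "is_edge F E \<longleftrightarrow> E \<subseteq> bdF F \<and> connected E \<and> geodesic_subset E \<and>
     (\<exists>a\<in>E. \<exists>b\<in>E. a \<noteq> b) \<and>
     (\<forall>E'. E \<subseteq> E' \<and> E' \<subseteq> bdF F \<and> connected E' \<and> geodesic_subset E' \<longrightarrow> E' = E)"

definition boundary_subsegment :: "complex set \<Rightarrow> complex set \<Rightarrow> bool" where
  "boundary_subsegment F I \<longleftrightarrow> I \<noteq> {} \<and> I \<subseteq> bdF F \<and>
     openin (top_of_set (bdF F)) I \<and> connected I"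

text \<open>The Cayley map identifies the upper half plane together with its ideal boundary
  R \<union> {\<infinity>} with the closed unit disk; points of the closed disk are used as
  coordinates for points of H \<union> R \<union> {\<infinity>} (\<infinity> corresponds to 1, 0 to -1, the imaginary
  axis to the diameter (-1,1), its closure to [-1,1]).\<close>
definition cayley :: "complex \<Rightarrow> complex" where
  "cayley z = (z - \<i>) / (z + \<i>)"

text \<open>The action of M on the closed disk: the conjugate of mob M by the Cayley map,
  dmob M (cayley z) = cayley (mob M z); it extends continuously to the ideal boundary.\<close>
definition dmob :: "mat2 \<Rightarrow> complex \<Rightarrow> complex" where
  "dmob M w = (let a = M$1$1; b = M$1$2; c = M$2$1; d = M$2$2;
                   \<alpha> = Complex ((a + d) / 2) ((b - c) / 2);
                   \<beta> = Complex ((a - d) / 2) (- (b + c) / 2)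
               in (\<alpha> * w + \<beta>) / (cnj \<beta> * w + cnj \<alpha>))"

text \<open>Endpoints (possibly ideal) of a subset of H, in disk coordinates.\<close>
definition ends :: "complex set \<Rightarrow> complex set" where
  "ends S = closure (cayley ` S) - cayley ` S"

text \<open>Boundary of F in the compactification (includes ideal vertices), disk coordinates.\<close>
definition cbd :: "complex set \<Rightarrow> complex set" where
  "cbd F = frontier (cayley ` F)"

text \<open>Open arc of the compactified boundary X running positively (counterclockwise,
  i.e. with F on the left) from a to b.  Angles are measured in the disk chart
  w \<mapsto> dmob \<tau> w, in which an interior point of F sits at the centre 0
  (hyperbolically convex F is then star shaped about 0).\<close>
definition pos_arc :: "mat2 \<Rightarrow> complex set \<Rightarrow> complex \<Rightarrow> complex \<Rightarrow> complex set" where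
  "pos_arc \<tau> X a b = {w \<in> X. 0 < Arg2pi (dmob \<tau> w / dmob \<tau> a) \<and>
                          Arg2pi (dmob \<tau> w / dmob \<tau> a) < Arg2pi (dmob \<tau> b / dmob \<tau> a)}"

end

theory Submission
  imports Defs
begin

definition kl :: "complex \<Rightarrow> complex" where
  "kl w = 2 * w / (1 + of_real ((cmod w)^2))"

definition gk :: "complex \<Rightarrow> complex" where
  "gk u = u / (1 + of_real (sqrt (1 - (cmod u)^2)))"

definition cayinv :: "complex \<Rightarrow> complex" where
  "cayinv w = \<i> * (1 + w) / (1 - w)"

definition PM :: "mat2 \<Rightarrow> complex \<Rightarrow> real" where
  "PM M z = M$1$1 * M$2$1 * ((Re z)^2 + (Im z)^2) + (M$1$1 * M$2$2 + M$1$2 * M$2$1) * Re z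
            + M$1$2 * M$2$2"

definition aff :: "mat2 \<Rightarrow> complex \<Rightarrow> real" where
  "aff M u = - (M$1$1 * M$2$1 + M$1$2 * M$2$2) / 2
     + ((M$1$1 * M$2$2 + M$1$2 * M$2$1) * Im u + (M$1$2 * M$2$2 - M$1$1 * M$2$1) * Re u) / 2"

lemma mob_Re:
  assumes "det M = 1" "Im z > 0"
  shows "Re (mob M z) = PM M z / ((M$2$1 * Re z + M$2$2)^2 + (M$2$1 * Im z)^2)"
    and "(M$2$1 * Re z + M$2$2)^2 + (M$2$1 * Im z)^2 > 0"
proof -
  have d: "M$1$1 * M$2$2 - M$1$2 * M$2$1 = 1" using assms(1) by (simp add: det_2)
  show "(M$2$1 * Re z + M$2$2)^2 + (M$2$1 * Im z)^2 > 0"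
  proof (rule ccontr)
    assume "\<not> ?thesis"
    then have "M$2$1 * Re z + M$2$2 = 0" "M$2$1 * Im z = 0"
      by (smt (verit) sum_power2_eq_zero_iff zero_le_power2)+
    then have "M$2$1 = 0" "M$2$2 = 0" using assms(2) by auto
    then show False using d by simp
  qed
  show "Re (mob M z) = PM M z / ((M$2$1 * Re z + M$2$2)^2 + (M$2$1 * Im z)^2)"
    unfolding mob_def PM_def Re_divide
    by (simp add: algebra_simps power2_eq_square)
qed

lemma aux_div: "R \<noteq> 0 \<Longrightarrow> D \<noteq> 0 \<Longrightarrow> 2 * w / complex_of_real (2 * R / D) = w * of_real (D / R)"
  by (simp add: field_simps)

lemma kl_cayley:
  assumes "Im z > 0"
  shows "kl (cayley z) = Complex (((Re z)^2 + (Im z)^2 - 1) / ((Re z)^2 + (Im z)^2 + 1))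
                                 (- 2 * Re z / ((Re z)^2 + (Im z)^2 + 1))"
proof -
  obtain x y where z: "z = Complex x y" by (cases z)
  have y: "y > 0" using assms z by simp
  have ne: "x^2 + (y+1)^2 \<noteq> 0" using y by (smt (verit) zero_le_power2 power2_less_0 sum_power2_eq_zero_iff)
  have ne2: "x^2 + y^2 + 1 \<noteq> 0" by (smt (verit) zero_le_power2)
  have c: "cayley z = Complex ((x^2 + y^2 - 1) / (x^2 + (y+1)^2)) (- 2 * x / (x^2 + (y+1)^2))"
    unfolding cayley_def z using ne
    by (simp add: complex_eq_iff Re_divide Im_divide field_simps power2_eq_square) (simp add: algebra_simps)?
  define D where "D = x^2 + (y+1)^2"
  have Dp: "D > 0" using ne unfolding D_def by (smt (verit) zero_le_power2)
  have n: "1 + (cmod (cayley z))^2 = 2 * (x^2+y^2+1) / D"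
    unfolding cmod_power2 c D_def[symmetric] using Dp
    by (simp add: field_simps power2_eq_square) (simp add: D_def algebra_simps power2_eq_square)
  have "kl (cayley z) = 2 * cayley z / of_real (1 + (cmod (cayley z))^2)"
    by (simp add: kl_def)
  also have "\<dots> = cayley z * of_real (D / (x^2+y^2+1))"
    unfolding n using Dp ne2 by (intro aux_div) auto
  also have "\<dots> = Complex ((x^2 + y^2 - 1) / (x^2 + y^2 + 1)) (- 2 * x / (x^2 + y^2 + 1))"
    unfolding c D_def[symmetric] using Dp ne2 by (simp add: complex_eq_iff)
  finally show ?thesis using z by simp
qed

lemma aux_aff: fixes a b c d r x :: real
  assumes "r + 1 \<noteq> 0"
  shows "-(a*c+b*d)/2 + ((a*d+b*c)*(-2*x/(r+1)) + (b*d-a*c)*((r-1)/(r+1)))/2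
     = -(a*c*((r::real)) + (a*d+b*c)*x + b*d)/(r+1)"
proof -
  have "(a*d+b*c)*(-2*x/(r+1)) = -2*x*(a*d+b*c)/(r+1)" by simp
  moreover have "(b*d-a*c)*((r-1)/(r+1)) = (b*d-a*c)*(r-1)/(r+1)" by simp
  moreover have "-(a*c+b*d)/2 = -(a*c+b*d)*(r+1)/(2*(r+1))"
    using nonzero_mult_divide_mult_cancel_right[OF assms, of "-(a*c+b*d)" 2] by simp
  ultimately have "-(a*c+b*d)/2 + ((a*d+b*c)*(-2*x/(r+1)) + (b*d-a*c)*((r-1)/(r+1)))/2
     = (-(a*c+b*d)*(r+1) + (-2*x*(a*d+b*c) + (b*d-a*c)*(r-1))) / (2*(r+1))"
    using assms by (simp add: add_divide_distrib diff_divide_distrib mult.commute)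
  also have "\<dots> = (2 * (- (a*c*r + (a*d+b*c)*x + b*d))) / (2*(r+1))"
    by (rule arg_cong[where f="\<lambda>t. t / (2*(r+1))"]) algebra
  also have "\<dots> = -(a*c*r + (a*d+b*c)*x + b*d)/(r+1)"
    by (rule nonzero_mult_divide_mult_cancel_left) simp
  finally show ?thesis .
qed

lemma aux_aff2: fixes a b c d n u v :: real
  assumes "n \<noteq> 0"
  shows "(-(a*c+b*d)/2 + ((a*d+b*c)*(2 * v / n) + (b*d-a*c)*(2 * u / n))/2) * n
     = - (a*c + b*d) / 2 * n + ((a*d + b*c) * (2 * v) + (b*d - a*c) * (2 * u)) / 2"
  using assms by (simp add: field_simps)

lemma kl_Re_Im: "Re (kl w) = 2 * Re w / (1 + (cmod w)^2)" "Im (kl w) = 2 * Im w / (1 + (cmod w)^2)"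
proof -
  have "kl w = of_real (2 / (1 + (cmod w)^2)) * w"
    unfolding kl_def by (simp add: field_simps)
  then show "Re (kl w) = 2 * Re w / (1 + (cmod w)^2)" "Im (kl w) = 2 * Im w / (1 + (cmod w)^2)"
    by simp_all
qed

lemma aff_kl_cayley:
  assumes "Im z > 0"
  shows "aff M (kl (cayley z)) = - PM M z / ((Re z)^2 + (Im z)^2 + 1)"
proof -
  have ne2: "(Re z)^2 + (Im z)^2 + 1 \<noteq> 0" by (smt (verit) zero_le_power2)
  define r where "r = (Re z)^2 + (Im z)^2"
  have r1: "r + 1 \<noteq> 0" using ne2 r_def by simp
  have "aff M (kl (cayley z)) = - (M$1$1 * M$2$1 + M$1$2 * M$2$2) / 2
     + ((M$1$1 * M$2$2 + M$1$2 * M$2$1) * (- 2 * Re z / (r + 1))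
      + (M$1$2 * M$2$2 - M$1$1 * M$2$1) * ((r - 1) / (r + 1))) / 2"
    unfolding kl_cayley[OF assms] aff_def r_def by simp
  also have "\<dots> = - PM M z / (r + 1)"
    unfolding PM_def r_def[symmetric] using aux_aff[OF r1] by simp
  finally show ?thesis by (simp add: r_def)
qed

lemma dmob_real:
  assumes "det M = 1" "cmod w \<le> 1"
  shows "dmob M w \<in> \<real> \<longleftrightarrow> aff M (kl w) = 0"
proof -
  define a b c d where "a = M$1$1" "b = M$1$2" "c = M$2$1" "d = M$2$2"
  have det: "a*d - b*c = 1" using assms(1) by (simp add: det_2 a_b_c_d_def)
  define \<alpha> where "\<alpha> = Complex ((a + d) / 2) ((b - c) / 2)"
  define \<beta> where "\<beta> = Complex ((a - d) / 2) (- (b + c) / 2)"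
  have dm: "dmob M w = (\<alpha> * w + \<beta>) / (cnj \<beta> * w + cnj \<alpha>)"
    unfolding dmob_def \<alpha>_def \<beta>_def a_b_c_d_def Let_def by simp
  have "(cmod \<alpha>)^2 - (cmod \<beta>)^2 = a*d - b*c"
    unfolding cmod_power2 \<alpha>_def \<beta>_def by (simp add: power2_eq_square field_simps)
  hence ab: "(cmod \<alpha>)^2 = (cmod \<beta>)^2 + 1" using det by simp
  have "cmod (cnj \<beta> * w) \<le> cmod \<beta>"
    using assms(2) by (simp add: norm_mult mult_left_le)
  also have "cmod \<beta> < cmod \<alpha>" using ab
    by (smt (verit) norm_ge_zero power_mono)
  finally have den: "cnj \<beta> * w + cnj \<alpha> \<noteq> 0"
    by (metis add.commute complex_mod_cnj less_irrefl minus_unique norm_minus_cancel)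
  obtain u v where w: "w = Complex u v" by (cases w)
  have key: "Im ((\<alpha> * w + \<beta>) * cnj (cnj \<beta> * w + cnj \<alpha>)) = aff M (kl w) * (1 + (cmod w)^2)"
  proof -
    have p: "1 + (cmod w)^2 > 0" by (smt (verit) zero_le_power2)
    have "aff M (kl w) * (1 + (cmod w)^2)
       = - (a*c + b*d) / 2 * (1 + (cmod w)^2) + ((a*d + b*c) * (2 * v) + (b*d - a*c) * (2 * u)) / 2"
      unfolding aff_def kl_Re_Im a_b_c_d_def[symmetric] 
      using aux_aff2[where n="1 + (cmod w)^2" and a=a and b=b and c=c and d=d and u=u and v=v] p w by simp
    also have "\<dots> = - (a*c + b*d) / 2 * (1 + u^2 + v^2) + ((a*d + b*c) * (2 * v) + (b*d - a*c) * (2 * u)) / 2"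
      unfolding w cmod_power2 by simp
    also have "\<dots> = Im ((\<alpha> * w + \<beta>) * cnj (cnj \<beta> * w + cnj \<alpha>))"
      unfolding \<alpha>_def \<beta>_def w by (simp add: algebra_simps power2_eq_square) (simp add: field_simps)?
    finally show ?thesis by simp
  qed
  have "dmob M w \<in> \<real> \<longleftrightarrow> Im (dmob M w) = 0" using complex_is_Real_iff by blast
  also have "\<dots> \<longleftrightarrow> Im ((\<alpha> * w + \<beta>) * cnj (cnj \<beta> * w + cnj \<alpha>)) = 0"
    unfolding dm complex_div_cnj[of "\<alpha> * w + \<beta>"] using den by (simp add: Im_divide_of_real)
  also have "\<dots> \<longleftrightarrow> aff M (kl w) = 0" unfolding key
    by (smt (verit) mult_eq_0_iff zero_le_power2)
  finally show ?thesis .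
qed

lemma kl_scale: "kl w = of_real (2 / (1 + (cmod w)^2)) * w"
  unfolding kl_def by (simp add: field_simps)

lemma gk_scale: "gk u = of_real (1 / (1 + sqrt (1 - (cmod u)^2))) * u"
  unfolding gk_def by (simp add: field_simps)

lemma gk_kl: assumes "cmod w \<le> 1" shows "gk (kl w) = w"
proof -
  define n where "n = (cmod w)^2"
  have n0: "0 \<le> n" "n \<le> 1" using assms unfolding n_def by (auto simp: power_le_one)
  have "cmod (kl w) = 2 / (1 + n) * cmod w" unfolding kl_scale n_def norm_mult norm_of_real
    by (simp add: abs_of_nonneg)
  hence "(cmod (kl w))^2 = 4 * n / (1+n)^2" unfolding n_def by (simp add: power_mult_distrib power_divide)
  moreover have "(1 + n)^2 \<noteq> 0" using n0 by simp
  moreover have "(1+n)^2 - 4 * n = (1 - n)^2" by algebra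
  ultimately have "1 - (cmod (kl w))^2 = ((1 - n) / (1 + n))^2"
    by (simp add: power_divide diff_divide_eq_iff)
  hence "sqrt (1 - (cmod (kl w))^2) = (1 - n) / (1 + n)" using n0 by simp
  hence "1 + sqrt (1 - (cmod (kl w))^2) = 2 / (1 + n)" using n0 by (simp add: field_simps)
  hence h: "1 / (1 + sqrt (1 - (cmod (kl w))^2)) = (1 + n) / 2" by simp
  have "gk (kl w) = of_real ((1 + n) / 2) * (of_real (2 / (1 + n)) * w)"
    unfolding gk_scale h by (simp only: kl_scale n_def)
  also have "\<dots> = of_real ((1 + n) / 2 * (2 / (1 + n))) * w"
    by (simp only: of_real_mult mult.assoc)
  also have "(1 + n) / 2 * (2 / (1 + n)) = 1" using n0 by simp
  finally show ?thesis by simp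
qed

lemma kl_gk: assumes "cmod u \<le> 1" shows "kl (gk u) = u" "cmod (gk u) \<le> 1"
  "cmod u < 1 \<Longrightarrow> cmod (gk u) < 1"
proof -
  define m where "m = (cmod u)^2"
  define s where "s = sqrt (1 - m)"
  have m0: "0 \<le> m" "m \<le> 1" using assms unfolding m_def by (auto simp: power_le_one)
  have s0: "0 \<le> s" "s^2 = 1 - m" using m0 unfolding s_def by auto
  have "cmod (gk u) = 1 / (1 + s) * cmod u" unfolding gk_scale s_def[symmetric] m_def[symmetric] norm_mult norm_of_real using s0
    by (simp add: abs_of_nonneg)
  hence "(cmod (gk u))^2 = m / (1 + s)^2" unfolding m_def by (simp add: power_mult_distrib power_divide)
  also have "m = (1 - s) * (1 + s)" using s0 by (simp add: algebra_simps power2_eq_square)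
  also have "(1 - s) * (1 + s) / (1 + s)^2 = (1 - s) / (1 + s)" using s0
    by (simp add: power2_eq_square)
  finally have g2: "(cmod (gk u))^2 = (1 - s) / (1 + s)" .
  have "kl (gk u) = of_real (2 / (1 + (1 - s) / (1 + s))) * (of_real (1 / (1 + s)) * u)"
    unfolding kl_scale g2 by (simp add: gk_scale s_def m_def)
  also have "2 / (1 + (1 - s) / (1 + s)) = 1 + s" using s0 by (simp add: field_simps)
  also have "complex_of_real (1 + s) * (complex_of_real (1 / (1 + s)) * u) = of_real ((1 + s) * (1 / (1 + s))) * u"
    by (simp only: of_real_mult mult.assoc)
  also have "\<dots> = u" using s0 by simp
  finally show "kl (gk u) = u" .
  show "cmod (gk u) \<le> 1" using g2 s0
  proof -
    have "(1 - s) / (1 + s) \<le> 1" using s0 by simp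
    hence "(cmod (gk u))^2 \<le> 1^2" using g2 by simp
    thus ?thesis by (rule power2_le_imp_le) simp
  qed
  assume "cmod u < 1"
  hence "m < 1" unfolding m_def by (simp add: power_less_one_iff abs_less_iff)
  hence "s > 0" unfolding s_def by simp
  hence "(cmod (gk u))^2 < 1" using g2 by simp
  thus "cmod (gk u) < 1" by (simp add: power_less_one_iff)
qed

lemma kl_norm: assumes "cmod w < 1" shows "cmod (kl w) < 1"
proof -
  define r where "r = cmod w"
  have r0: "0 \<le> r" "r < 1" using assms r_def by auto
  have "cmod (kl w) = 2 * r / (1 + r^2)" unfolding kl_scale r_def norm_mult norm_of_real
    by (simp add: abs_of_nonneg)
  also have "\<dots> < 1" using r0
  proof -
    have "(1 - r)^2 > 0" using r0 by simp
    hence "2 * r < 1 + r^2" by (simp add: power2_eq_square algebra_simps)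
    thus ?thesis by (simp add: pos_divide_less_eq add_pos_nonneg)
  qed
  finally show ?thesis .
qed

lemma cayley_norm: assumes "Im z > 0" shows "cmod (cayley z) < 1"
proof -
  have ne: "z + \<i> \<noteq> 0" using assms by (auto simp: complex_eq_iff)
  have "(cmod (z - \<i>))^2 < (cmod (z + \<i>))^2" unfolding cmod_power2 using assms
    by (simp add: power2_eq_square algebra_simps)
  hence "cmod (z - \<i>) < cmod (z + \<i>)" by (simp add: power_less_imp_less_base)
  thus ?thesis unfolding cayley_def using ne by (simp add: norm_divide)
qed

lemma cayinv: assumes "cmod w < 1" shows "Im (cayinv w) > 0" "cayley (cayinv w) = w"
proof -
  have ne: "1 - w \<noteq> 0" using assms by auto
  have "Im (cayinv w) = (1 - (cmod w)^2) / (cmod (1 - w))^2"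
    unfolding cayinv_def cmod_power2 using ne
    by (simp add: Im_divide power2_eq_square algebra_simps)
  moreover have "(cmod w)^2 < 1" using assms by (simp add: power_less_one_iff)
  ultimately show "Im (cayinv w) > 0" using ne by simp
  have "cayinv w - \<i> = (\<i> * (1 + w) - \<i> * (1 - w)) / (1 - w)" unfolding cayinv_def using ne
    by (simp add: diff_divide_distrib)
  also have "\<i> * (1 + w) - \<i> * (1 - w) = 2 * \<i> * w" by algebra
  finally have a: "cayinv w - \<i> = 2 * \<i> * w / (1 - w)" .
  have "cayinv w + \<i> = (\<i> * (1 + w) + \<i> * (1 - w)) / (1 - w)" unfolding cayinv_def using ne
    by (simp add: add_divide_distrib)
  also have "\<i> * (1 + w) + \<i> * (1 - w) = 2 * \<i>" by algebra
  finally have b: "cayinv w + \<i> = 2 * \<i> / (1 - w)" .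
  show "cayley (cayinv w) = w" unfolding cayley_def a b using ne by simp
qed

lemma cont_gk: "continuous_on (cball 0 1) gk"
proof -
  have "\<forall>u\<in>cball 0 1. 1 + complex_of_real (sqrt (1 - (cmod u)^2)) \<noteq> 0"
  proof
    fix u :: complex assume "u \<in> cball 0 1"
    hence "0 \<le> 1 - (cmod u)^2" by (simp add: power_le_one)
    hence "sqrt (1 - (cmod u)^2) \<ge> 0" by simp
    thus "1 + complex_of_real (sqrt (1 - (cmod u)^2)) \<noteq> 0"
      by (metis add_nonneg_eq_0_iff of_real_1 of_real_add of_real_eq_0_iff zero_less_one_class.zero_le_one one_neq_zero)
  qed
  thus ?thesis unfolding gk_def by (intro continuous_intros) auto
qed

lemma cont_kl: "continuous_on UNIV kl"
proof -
  have "\<forall>w. 1 + complex_of_real ((cmod w)^2) \<noteq> 0"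
    by (metis add_nonneg_eq_0_iff of_real_1 of_real_add of_real_eq_0_iff zero_le_power2 zero_less_one_class.zero_le_one one_neq_zero)
  thus ?thesis unfolding kl_def by (intro continuous_intros) auto
qed

lemma cont_cayley: "continuous_on {z. Im z \<ge> 0} cayley"
proof -
  have "\<forall>z\<in>{z. Im z \<ge> 0}. z + \<i> \<noteq> 0" by (auto simp: complex_eq_iff)
  thus ?thesis unfolding cayley_def by (intro continuous_intros) auto
qed

lemma cont_Ki: "continuous_on (ball 0 1) (\<lambda>u. cayinv (gk u))"
proof -
  have g: "continuous_on (ball 0 1) gk" using cont_gk by (rule continuous_on_subset) auto
  have "\<forall>u\<in>ball 0 1. 1 - gk u \<noteq> 0"
  proof
    fix u :: complex assume "u \<in> ball 0 1"
    hence "cmod (gk u) < 1" using kl_gk(3)[of u] by simp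
    thus "1 - gk u \<noteq> 0" by auto
  qed
  thus ?thesis unfolding cayinv_def by (intro continuous_intros g) auto
qed

lemma aff_comb: "aff M ((1 - t) *\<^sub>R p + t *\<^sub>R q) = (1 - t) * aff M p + t * aff M q"
  unfolding aff_def by (simp add: algebra_simps add_divide_distrib diff_divide_distrib)

lemma aff_shift: "aff M (u - of_real e * Complex (M$1$2 * M$2$2 - M$1$1 * M$2$1) (M$1$1 * M$2$2 + M$1$2 * M$2$1))
   = aff M u - e * ((M$1$2 * M$2$2 - M$1$1 * M$2$1)^2 + (M$1$1 * M$2$2 + M$1$2 * M$2$1)^2) / 2"
  unfolding aff_def by (simp add: algebra_simps power2_eq_square add_divide_distrib diff_divide_distrib)

lemma coef_nz: fixes M :: mat2 assumes "det M = 1"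
  shows "(M$1$2 * M$2$2 - M$1$1 * M$2$1)^2 + (M$1$1 * M$2$2 + M$1$2 * M$2$1)^2 > 0"
proof -
  define a b c d where "a = M$1$1" "b = M$1$2" "c = M$2$1" "d = M$2$2"
  have det: "a*d - b*c = 1" using assms(1) by (simp add: det_2 a_b_c_d_def)
  have "(b*d - a*c)^2 + (a*d + b*c)^2 = (a^2 + b^2) * (c^2 + d^2)" by algebra
  moreover have "a^2 + b^2 > 0" using det
    by (smt (verit) mult_eq_0_iff power2_eq_square sum_power2_eq_zero_iff zero_le_power2)
  moreover have "c^2 + d^2 > 0" using det
    by (smt (verit) mult_eq_0_iff power2_eq_square sum_power2_eq_zero_iff zero_le_power2)
  ultimately show ?thesis unfolding a_b_c_d_def by simp
qed

lemma lin2: fixes A B A' B' xa ya xb yb :: real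
  assumes "A^2 + B^2 > 0" "xb \<noteq> 0 \<or> yb \<noteq> 0"
    "A*ya + B*xa = 0" "A*yb + B*xb = 0" "A'*yb + B'*xb = 0"
  shows "A'*ya + B'*xa = 0"
proof -
  have "A * (ya*xb - yb*xa) = xb * (A*ya + B*xa) - xa * (A*yb + B*xb)" by algebra
  hence e1: "A * (ya*xb - yb*xa) = 0" using assms by simp
  have "B * (ya*xb - yb*xa) = ya * (A*yb + B*xb) - yb * (A*ya + B*xa)" by algebra
  hence e2: "B * (ya*xb - yb*xa) = 0" using assms by simp
  have AB: "A \<noteq> 0 \<or> B \<noteq> 0" using assms(1) by auto
  have det: "ya*xb - yb*xa = 0" using e1 e2 AB by auto
  have "xb * (A'*ya + B'*xa) = xa * (A'*yb + B'*xb) + A' * (ya*xb - yb*xa)" by algebra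
  hence "xb * (A'*ya + B'*xa) = 0" using det assms by simp
  moreover have "yb * (A'*ya + B'*xa) = ya * (A'*yb + B'*xb) - B' * (ya*xb - yb*xa)" by algebra
  hence "yb * (A'*ya + B'*xa) = 0" using det assms by simp
  ultimately show ?thesis using assms(2) by auto
qed

lemma aff_line: fixes M N :: mat2
  assumes "det M = 1" "u1 \<noteq> u2" "aff M u1 = 0" "aff M u2 = 0" "aff M v = 0"
    "aff N u1 = 0" "aff N u2 = 0"
  shows "aff N v = 0"
proof -
  have h: "aff P x - aff P y = ((P$1$1 * P$2$2 + P$1$2 * P$2$1) * (Im x - Im y)
      + (P$1$2 * P$2$2 - P$1$1 * P$2$1) * (Re x - Re y)) / 2" for P x y
    unfolding aff_def by (simp add: algebra_simps add_divide_distrib diff_divide_distrib)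
  have nz: "Re u2 - Re u1 \<noteq> 0 \<or> Im u2 - Im u1 \<noteq> 0" using assms(2) by (auto simp: complex_eq_iff)
  have "(N$1$1 * N$2$2 + N$1$2 * N$2$1) * (Im v - Im u1) + (N$1$2 * N$2$2 - N$1$1 * N$2$1) * (Re v - Re u1) = 0"
    apply (rule lin2[where A="M$1$1 * M$2$2 + M$1$2 * M$2$1" and B="M$1$2 * M$2$2 - M$1$1 * M$2$1"
          and xb="Re u2 - Re u1" and yb="Im u2 - Im u1"])
    using coef_nz[OF assms(1)] nz h[of M v u1] h[of M u2 u1] h[of N u2 u1] assms
    by (simp_all add: add.commute)
  thus ?thesis using h[of N v u1] assms by simp
qed

lemma pos_area:
  assumes "open U" "z \<in> U" "U \<subseteq> S" "\<And>x. x \<in> U \<Longrightarrow> Im x > 0"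
  shows "hyp_area S > 0"
proof -
  obtain r where r: "r > 0" "ball z r \<subseteq> U" using assms(1,2) open_contains_ball by blast
  have iz: "Im z > 0" using assms(2,4) by simp
  define c where "c = 1 / (Im z + r)^2"
  have c0: "c > 0" using iz r unfolding c_def by simp
  have pt: "ennreal c * indicator (ball z r) x \<le> ennreal (indicator S x / (Im x)^2)" for x
  proof (cases "x \<in> ball z r")
    case True
    hence xS: "x \<in> S" "Im x > 0" using r assms by auto
    have "\<bar>Im x - Im z\<bar> \<le> cmod (x - z)" using abs_Im_le_cmod[of "x - z"] by simp
    also have "\<dots> < r" using True by (simp add: dist_norm norm_minus_commute)
    finally have "Im x < Im z + r" by simp
    hence "(Im x)^2 \<le> (Im z + r)^2" using xS by (intro power_mono) auto
    hence "c \<le> 1 / (Im x)^2" unfolding c_def using xS iz r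
      by (intro divide_left_mono) (auto intro!: mult_pos_pos)
    thus ?thesis using True xS by (simp add: ennreal_leI)
  next
    case False thus ?thesis by simp
  qed
  have "(\<integral>\<^sup>+ x. ennreal c * indicator (ball z r) x \<partial>lborel) = ennreal c * emeasure lborel (ball z r)"
    by (rule nn_integral_cmult_indicator) simp
  also have "emeasure lborel (ball z r) = ennreal (unit_ball_vol (real DIM(complex)) * r ^ DIM(complex))"
    using r by (intro emeasure_ball) simp
  finally have eq: "(\<integral>\<^sup>+ x. ennreal c * indicator (ball z r) x \<partial>lborel)
     = ennreal c * ennreal (unit_ball_vol (real DIM(complex)) * r ^ DIM(complex))" .
  have "0 < ennreal c * ennreal (unit_ball_vol (real DIM(complex)) * r ^ DIM(complex))"
    using c0 r by (simp add: ennreal_mult'[symmetric])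
  also have "\<dots> \<le> hyp_area S" unfolding hyp_area_def eq[symmetric]
    by (rule nn_integral_mono) (rule pt)
  finally show ?thesis .
qed

lemma cont_quad: fixes a b c :: real
  shows "continuous_on UNIV (\<lambda>z::complex. a * ((Re z)^2 + (Im z)^2) + b * Re z + c)"
  by (intro continuous_intros)

lemma open_PM: "open {z. 0 < PM M z}"
proof -
  have "continuous_on UNIV (PM M)" unfolding PM_def by (rule cont_quad)
  thus ?thesis by (intro open_Collect_less) auto
qed

lemma aux_half: fixes c A B x y :: real
  shows "(- c / 2 + (A * y + B * x) / 2 < 0) \<longleftrightarrow> (B * x + A * y < c)"
  by (auto simp: field_simps)

lemma open_aff: "open {u. aff M u < 0}"
proof -
  have "{u. aff M u < 0} = {u. inner (Complex (M$1$2 * M$2$2 - M$1$1 * M$2$1) (M$1$1 * M$2$2 + M$1$2 * M$2$1)) u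
          < M$1$1 * M$2$1 + M$1$2 * M$2$2}"
    unfolding aff_def inner_complex_def complex.sel aux_half ..
  thus ?thesis by (simp add: open_halfspace_lt)
qed

lemma image_subsetI_rev: "f ` A \<subseteq> B \<Longrightarrow> x \<in> A \<Longrightarrow> f x \<in> B" by blast

theorem lemma5p3:
  fixes \<Gamma> :: "mat2 set" and F I J :: "complex set"
    and \<tau> \<sigma> :: mat2 and z0 z1 :: complex
  assumes disc: "discrete_subgroup \<Gamma>"
    and fund: "fundamental_polygon \<Gamma> F"
    and covol: "hyp_area F < \<infinity>"
    and I: "boundary_subsegment F I"
    and J: "boundary_subsegment F J"
    and disj: "I \<inter> J = {}"
    and edges: "\<not> (\<exists>E. is_edge F E \<and> (\<exists>e\<in>ends I. e \<in> closure (cayley ` E))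
                                  \<and> (\<exists>e\<in>ends J. e \<in> closure (cayley ` E)))"
    and tau: "\<tau> \<in> SL2" "\<i> \<in> mob \<tau> ` F"
    and z0: "z0 \<in> ends I" and z1: "z1 \<in> ends J"
    and arc: "pos_arc \<tau> (cbd F) z1 z0 \<inter> cayley ` (I \<union> J) = {}"
    and sigma: "\<sigma> \<in> SL2" "dmob \<sigma> z0 \<in> \<real>" "dmob \<sigma> z1 \<in> \<real>"
               "Re (dmob \<sigma> z1) < Re (dmob \<sigma> z0)"
  shows "hyp_area (closed_hp \<sigma> \<inter> F) > 0"
proof (rule ccontr)
  assume nopos: "\<not> hyp_area (closed_hp \<sigma> \<inter> F) > 0"
  obtain Ms where Ms: "finite Ms" "Ms \<subseteq> SL2" "F = UHP \<inter> \<Inter>(open_hp ` Ms)"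
    using fund unfolding fundamental_polygon_def by blast
  have Fne: "F \<noteq> {}" using fund unfolding fundamental_polygon_def by blast
  have dets: "det \<sigma> = 1" using sigma(1) by (simp add: SL2_def)
  define K where "K z = kl (cayley z)" for z
  define Ki where "Ki u = cayinv (gk u)" for u
  have Re_sign: "Re (mob M z) > 0 \<longleftrightarrow> PM M z > 0" "Re (mob M z) = 0 \<longleftrightarrow> PM M z = 0"
     "Re (mob M z) \<le> 0 \<longleftrightarrow> PM M z \<le> 0"
    if "det M = 1" "Im z > 0" for M z
    using mob_Re[OF that] by (auto simp: zero_less_divide_iff divide_le_0_iff)
  have aff_sign: "aff M (K z) < 0 \<longleftrightarrow> PM M z > 0" "aff M (K z) = 0 \<longleftrightarrow> PM M z = 0"
     "aff M (K z) \<ge> 0 \<longleftrightarrow> PM M z \<le> 0"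
    if "Im z > 0" for M z
  proof -
    have p: "(Re z)^2 + (Im z)^2 + 1 > 0" by (smt (verit) zero_le_power2)
    show "aff M (K z) < 0 \<longleftrightarrow> PM M z > 0" "aff M (K z) = 0 \<longleftrightarrow> PM M z = 0"
     "aff M (K z) \<ge> 0 \<longleftrightarrow> PM M z \<le> 0"
      unfolding K_def aff_kl_cayley[OF that] using p
      by (auto simp: divide_less_0_iff zero_le_divide_iff divide_le_0_iff zero_less_divide_iff)
  qed
  have Fchar: "z \<in> F \<longleftrightarrow> Im z > 0 \<and> (\<forall>M\<in>Ms. PM M z > 0)" for z
  proof -
    have "\<forall>M\<in>Ms. det M = 1" using Ms(2) by (auto simp: SL2_def)
    thus ?thesis unfolding Ms(3) open_hp_def UHP_def using Re_sign(1) by auto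
  qed
  define C where "C = {u. cmod u < 1 \<and> (\<forall>M\<in>Ms. aff M u < 0)}"
  have Ki: "Im (Ki u) > 0" "K (Ki u) = u" "cayley (Ki u) = gk u" if "cmod u < 1" for u
  proof -
    have g: "cmod (gk u) < 1" using kl_gk(3)[of u] that by simp
    show "Im (Ki u) > 0" "cayley (Ki u) = gk u" unfolding Ki_def using cayinv[OF g] by auto
    thus "K (Ki u) = u" unfolding K_def using kl_gk(1)[of u] that by simp
  qed
  have FC: "K z \<in> C" if "z \<in> F" for z
  proof -
    have z: "Im z > 0" "\<forall>M\<in>Ms. PM M z > 0" using that Fchar by auto
    have "cmod (K z) < 1" unfolding K_def using kl_norm cayley_norm z(1) by blast
    thus ?thesis unfolding C_def using aff_sign(1)[OF z(1)] z(2) by auto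
  qed
  have CF: "Ki u \<in> F" if "u \<in> C" for u
  proof -
    have u: "cmod u < 1" "\<forall>M\<in>Ms. aff M u < 0" using that C_def by auto
    show ?thesis unfolding Fchar using Ki[OF u(1)] aff_sign(1)[of "Ki u"] u(2) by auto
  qed
  have Cconv: "convex C"
  proof -
    have "C = ball 0 1 \<inter> {u. \<forall>M\<in>Ms. aff M u < 0}" unfolding C_def by auto
    moreover have "convex {u. \<forall>M\<in>Ms. aff M u < 0}"
    proof (unfold convex_alt, safe)
      fix x y M and t :: real
      assume x: "\<forall>M\<in>Ms. aff M x < 0" and y: "\<forall>M\<in>Ms. aff M y < 0" and t: "0 \<le> t" "t \<le> 1"
        and M: "M \<in> Ms"
      have "aff M ((1 - t) *\<^sub>R x + t *\<^sub>R y) = (1 - t) * aff M x + t * aff M y" by (rule aff_comb)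
      also have "\<dots> < 0"
      proof (cases "t = 0")
        case True thus ?thesis using x M by simp
      next
        case False
        hence "t * aff M y < 0" using t y M by (simp add: mult_pos_neg)
        moreover have "(1 - t) * aff M x \<le> 0" using t x M by (intro mult_nonneg_nonpos) auto
        ultimately show ?thesis by simp
      qed
      finally show "aff M ((1 - t) *\<^sub>R x + t *\<^sub>R y) < 0" .
    qed
    ultimately show ?thesis by (simp add: convex_Int)
  qed
  have Copen: "open C"
  proof -
    have "C = ball 0 1 \<inter> (\<Inter>M\<in>Ms. {u. aff M u < 0})" unfolding C_def by auto
    moreover have "open {u. aff M u < 0}" for M
      by (rule open_aff)
    hence "open (\<Inter>M\<in>Ms. {u. aff M u < 0})" using Ms(1) by (intro open_INT) auto
    ultimately show ?thesis by (metis open_Int open_ball)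
  qed
  have noR: "Re (mob \<sigma> z) \<le> 0" if "z \<in> F" for z
  proof (rule ccontr)
    assume "\<not> ?thesis"
    hence zR: "z \<in> open_hp \<sigma>" using that Fchar unfolding open_hp_def UHP_def by auto
    have ohp: "open_hp \<sigma> = {z. 0 < Im z} \<inter> {z. 0 < PM \<sigma> z}"
      unfolding open_hp_def UHP_def using Re_sign(1)[OF dets] by auto
    have "open {z. 0 < Im z}" by (intro open_Collect_less continuous_intros)
    hence "open (open_hp \<sigma>)" unfolding ohp using open_PM by (metis open_Int)
    moreover have "open F"
    proof -
      have "F = {z. 0 < Im z} \<inter> (\<Inter>M\<in>Ms. {z. 0 < PM M z})" using Fchar by auto
      moreover have "open {z. 0 < PM M z}" for M by (rule open_PM)
      moreover have "open (\<Inter>M\<in>Ms. {z. 0 < PM M z})" using Ms(1) calculation(2) by (intro open_INT) auto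
      moreover have "open {z. 0 < Im z}" by (intro open_Collect_less continuous_intros)
      ultimately show ?thesis by (metis open_Int)
    qed
    ultimately have "hyp_area (closed_hp \<sigma> \<inter> F) > 0"
      using zR that
      by (intro pos_area[of "open_hp \<sigma> \<inter> F" z]) (auto simp: open_hp_def closed_hp_def UHP_def)
    thus False using nopos by simp
  qed
  have Cnn: "aff \<sigma> u \<ge> 0" if "u \<in> C" for u
  proof -
    have u: "cmod u < 1" using that C_def by auto
    have "Re (mob \<sigma> (Ki u)) \<le> 0" using noR CF that by blast
    hence "PM \<sigma> (Ki u) \<le> 0" using Re_sign(3)[OF dets Ki(1)[OF u]] by simp
    thus ?thesis using aff_sign(3)[OF Ki(1)[OF u]] Ki(2)[OF u] by simp
  qed
  have clF: "closure F \<subseteq> {z. Im z \<ge> 0}"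
    by (rule closure_minimal) (auto simp: Fchar closed_halfspace_Im_ge)
  have cay_cl: "cayley ` closure F \<subseteq> closure (cayley ` F)"
    by (rule image_closure_subset) (auto intro: continuous_on_subset[OF cont_cayley clF] closure_subset[THEN subsetD])
  have bdsub: "bdF F \<subseteq> closure F" unfolding bdF_def Fbar_def by auto
  have clI: "closure (cayley ` I) \<subseteq> closure (cayley ` F)"
    using I cay_cl bdsub unfolding boundary_subsegment_def
    by (intro closure_minimal) auto
  have clJ: "closure (cayley ` J) \<subseteq> closure (cayley ` F)"
    using J cay_cl bdsub unfolding boundary_subsegment_def
    by (intro closure_minimal) auto
  have clcball: "closure (cayley ` F) \<subseteq> cball 0 1"
    by (rule closure_minimal) (auto simp: Fchar intro: less_imp_le[OF cayley_norm])
  have klC: "kl ` closure (cayley ` F) \<subseteq> closure C"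
  proof (rule image_closure_subset)
    show "continuous_on (closure (cayley ` F)) kl" using cont_kl continuous_on_subset by blast
    show "kl ` cayley ` F \<subseteq> closure C" using FC closure_subset unfolding K_def by fastforce
  qed simp
  have z0c: "z0 \<in> closure (cayley ` F)" using z0 clI unfolding ends_def by auto
  have z1c: "z1 \<in> closure (cayley ` F)" using z1 clJ unfolding ends_def by auto
  define p where "p = kl z0"
  define q where "q = kl z1"
  have z0n: "cmod z0 \<le> 1" and z1n: "cmod z1 \<le> 1" using z0c z1c clcball by auto
  have pC: "p \<in> closure C" and qC: "q \<in> closure C" using klC z0c z1c p_def q_def by auto
  have pn: "cmod p \<le> 1" and qn: "cmod q \<le> 1"
  proof -
    have "closure C \<subseteq> cball 0 1" by (rule closure_minimal) (auto simp: C_def)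
    thus "cmod p \<le> 1" "cmod q \<le> 1" using pC qC by auto
  qed
  have affp: "aff \<sigma> p = 0" using dmob_real[OF dets z0n] sigma(2) p_def by simp
  have affq: "aff \<sigma> q = 0" using dmob_real[OF dets z1n] sigma(3) q_def by simp
  have gp: "gk p = z0" using gk_kl[OF z0n] p_def by simp
  have gq: "gk q = z1" using gk_kl[OF z1n] q_def by simp
  have pq: "p \<noteq> q" using sigma(4) gp gq by auto
  define seg where "seg = open_segment p q"
  have seg_props: "cmod u < 1" "u \<in> closure C" "aff \<sigma> u = 0" if useg: "u \<in> seg" for u
  proof -
    obtain t where t: "0 < t" "t < 1" "u = (1 - t) *\<^sub>R p + t *\<^sub>R q"
      using useg unfolding seg_def in_segment(2) by blast
    show "aff \<sigma> u = 0" using t(3) aff_comb[of \<sigma> t p q] affp affq by simp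
    have "closed_segment p q \<subseteq> closure C"
      by (rule closed_segment_subset[OF pC qC convex_closure[OF Cconv]])
    thus "u \<in> closure C" using useg open_closed_segment unfolding seg_def by blast
    have nq: "(cmod u)^2 = (1 - t) * (cmod p)^2 + t * (cmod q)^2 - t * (1 - t) * (cmod (p - q))^2"
      unfolding t(3) cmod_power2 by (simp add: power2_eq_square algebra_simps)
    have "(cmod (p - q))^2 > 0" using pq by simp
    hence h1: "t * (1 - t) * (cmod (p - q))^2 > 0" using t by simp
    have h2: "(cmod p)^2 \<le> 1" "(cmod q)^2 \<le> 1" using pn qn by (simp_all add: power_le_one)
    have "(1 - t) * (cmod p)^2 + t * (cmod q)^2 - t * (1 - t) * (cmod (p - q))^2 < 1"
    proof -
      have "(1 - t) * (cmod p)^2 \<le> (1 - t) * 1" using t h2(1) by (intro mult_left_mono) auto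
      moreover have "t * (cmod q)^2 \<le> t * 1" using t h2(2) by (intro mult_left_mono) auto
      ultimately show ?thesis using h1 by simp
    qed
    hence "(cmod u)^2 < 1" using nq by simp
    thus "cmod u < 1" by (simp add: power_less_one_iff)
  qed
  have notC: "u \<notin> C" if useg: "u \<in> seg" for u
  proof
    assume uC: "u \<in> C"
    obtain e where e: "e > 0" "ball u e \<subseteq> C" using Copen uC open_contains_ball by blast
    define dir where "dir = Complex (\<sigma>$1$2 * \<sigma>$2$2 - \<sigma>$1$1 * \<sigma>$2$1) (\<sigma>$1$1 * \<sigma>$2$2 + \<sigma>$1$2 * \<sigma>$2$1)"
    define N where "N = (\<sigma>$1$2 * \<sigma>$2$2 - \<sigma>$1$1 * \<sigma>$2$1)^2 + (\<sigma>$1$1 * \<sigma>$2$2 + \<sigma>$1$2 * \<sigma>$2$1)^2"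
    have N0: "N > 0" unfolding N_def by (rule coef_nz[OF dets])
    have dn: "cmod dir > 0" using N0 unfolding dir_def N_def by (auto simp: complex_eq_iff)
    define \<epsilon> where "\<epsilon> = e / (2 * cmod dir)"
    have \<epsilon>0: "\<epsilon> > 0" unfolding \<epsilon>_def using e dn by simp
    define v where "v = u - of_real \<epsilon> * dir"
    have "dist u v = \<epsilon> * cmod dir" unfolding v_def dist_norm using \<epsilon>0 by (simp add: norm_mult)
    also have "\<dots> = e / 2" unfolding \<epsilon>_def using dn by simp
    finally have "v \<in> C" using e by auto
    hence "aff \<sigma> v \<ge> 0" by (rule Cnn)
    moreover have "aff \<sigma> v = aff \<sigma> u - \<epsilon> * N / 2" unfolding v_def dir_def N_def by (rule aff_shift)
    ultimately show False using seg_props(3)[OF useg] \<epsilon>0 N0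
      by (smt (verit) divide_pos_pos mult_pos_pos)
  qed
  obtain f0 where f0: "f0 \<in> F" using Fne by blast
  define c0 where "c0 = K f0"
  have c0C: "c0 \<in> C" unfolding c0_def using FC f0 by simp
  have Kicont: "isCont Ki u" if "cmod u < 1" for u
    using cont_Ki that unfolding Ki_def[abs_def]
    by (simp add: continuous_on_eq_continuous_at)
  have inbd: "Ki u \<in> bdF F \<inter> geodesic_line \<sigma>" if useg: "u \<in> seg" for u
  proof -
    have u1: "cmod u < 1" using seg_props(1)[OF useg] .
    note Kiu = Ki[OF u1]
    have geo: "Ki u \<in> geodesic_line \<sigma>"
      unfolding geodesic_line_def UHP_def
      using Kiu(1) Re_sign(2)[OF dets Kiu(1)] aff_sign(2)[OF Kiu(1), of \<sigma>] Kiu(2) seg_props(3)[OF useg]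
      by simp
    have nF: "Ki u \<notin> F" using FC Kiu(2) notC[OF useg] by metis
    have cl: "Ki u \<in> closure F"
    proof -
      define s where "s n = 1 - inverse (real (Suc (Suc n)))" for n
      define y where "y n = (1 - s n) *\<^sub>R c0 + s n *\<^sub>R u" for n
      have c0u: "c0 \<noteq> u" using c0C notC[OF useg] by auto
      have sbd: "0 < s n" "s n < 1" for n unfolding s_def by (auto simp: field_simps)
      have yseg: "y n \<in> open_segment c0 u" for n
        unfolding in_segment(2) y_def using c0u sbd[of n] by blast
      have "open_segment c0 u \<subseteq> interior C"
        by (rule in_interior_closure_convex_segment[OF Cconv]) (use c0C Copen seg_props(2)[OF useg] interior_open in auto)
      hence yC: "y n \<in> C" for n using yseg interior_open[OF Copen] by auto
      have "(\<lambda>n. inverse (real (Suc (Suc n)))) \<longlonglongrightarrow> 0"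
        by (rule LIMSEQ_Suc[OF LIMSEQ_inverse_real_of_nat])
      hence "s \<longlonglongrightarrow> 1 - 0" unfolding s_def[abs_def] by (intro tendsto_intros)
      hence "y \<longlonglongrightarrow> (1 - 1) *\<^sub>R c0 + 1 *\<^sub>R u" unfolding y_def[abs_def] by (intro tendsto_intros) auto
      hence "y \<longlonglongrightarrow> u" by simp
      hence "(\<lambda>n. Ki (y n)) \<longlonglongrightarrow> Ki u" by (rule isCont_tendsto_compose[OF Kicont[OF u1]])
      moreover have "\<forall>n. Ki (y n) \<in> F" using CF yC by blast
      ultimately show ?thesis unfolding closure_sequential by (intro exI[of _ "\<lambda>n. Ki (y n)"]) auto
    qed
    show ?thesis using geo nF cl Kiu(1) unfolding bdF_def Fbar_def UHP_def by auto
  qed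
  define A where "A = Ki ` seg"
  have segball: "seg \<subseteq> ball 0 1" using seg_props(1) by auto
  have conA: "connected A" unfolding A_def
    using connected_continuous_image[OF continuous_on_subset[OF cont_Ki segball]
        convex_connected[OF convex_open_segment[of p q], folded seg_def]]
    unfolding Ki_def[abs_def] by simp
  have Asub: "A \<subseteq> bdF F \<inter> geodesic_line \<sigma>" unfolding A_def using inbd by auto
  define m1 where "m1 = (1 - 1/4) *\<^sub>R p + (1/4 :: real) *\<^sub>R q"
  define m2 where "m2 = (1 - 3/4) *\<^sub>R p + (3/4 :: real) *\<^sub>R q"
  have m1s: "m1 \<in> seg" unfolding seg_def in_segment(2) m1_def using pq
    by (intro conjI exI[of _ "1/4"]) auto
  have m2s: "m2 \<in> seg" unfolding seg_def in_segment(2) m2_def using pq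
    by (intro conjI exI[of _ "3/4"]) auto
  have m12: "m1 \<noteq> m2"
  proof
    assume "m1 = m2"
    moreover have "m1 - m2 = (1/2 :: real) *\<^sub>R (p - q)" unfolding m1_def m2_def
      by (simp add: complex_eq_iff algebra_simps)
    ultimately have "(1/2 :: real) *\<^sub>R (p - q) = 0" by simp
    thus False using pq by simp
  qed
  define x0 where "x0 = Ki m1"
  define E where "E = connected_component_set (bdF F \<inter> geodesic_line \<sigma>) x0"
  have x0A: "x0 \<in> A" unfolding x0_def A_def using m1s by blast
  have AE: "A \<subseteq> E" unfolding E_def by (rule connected_component_maximal[OF x0A conA Asub])
  have Esub: "E \<subseteq> bdF F \<inter> geodesic_line \<sigma>" unfolding E_def by (rule connected_component_subset)
  have cls: "closure seg = closed_segment p q" unfolding seg_def using pq by (simp add: closure_open_segment)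
  have cseg: "closed_segment p q \<subseteq> cball 0 1"
    by (rule closed_segment_subset) (simp_all add: pn qn convex_cball mem_cball_0)
  have contg: "continuous_on (closure seg) gk" unfolding cls by (rule continuous_on_subset[OF cont_gk cseg])
  have gks: "gk ` seg \<subseteq> cayley ` E"
  proof
    fix x assume "x \<in> gk ` seg"
    then obtain u where u: "u \<in> seg" "x = gk u" by blast
    have "Ki u \<in> E" using AE u(1) unfolding A_def by blast
    moreover have "x = cayley (Ki u)" using Ki(3)[OF seg_props(1)[OF u(1)]] u(2) by simp
    ultimately show "x \<in> cayley ` E" by blast
  qed
  have clE: "gk ` closure seg \<subseteq> closure (cayley ` E)"
    by (rule image_closure_subset[OF contg closed_closure]) (use gks closure_subset in blast)
  have pcl: "p \<in> closure seg" and qcl: "q \<in> closure seg" unfolding cls by simp_all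
  have z0E: "z0 \<in> closure (cayley ` E)" using clE pcl unfolding gp[symmetric] by (rule image_subsetI_rev)
  have z1E: "z1 \<in> closure (cayley ` E)" using clE qcl unfolding gq[symmetric] by (rule image_subsetI_rev)
  have edge: "is_edge F E"
    unfolding is_edge_def
  proof (intro conjI allI impI)
    show "E \<subseteq> bdF F" using Esub by auto
    show "connected E" unfolding E_def by (rule connected_connected_component)
    show "geodesic_subset E" unfolding geodesic_subset_def using sigma(1) Esub by auto
    have "Ki m1 \<in> E" "Ki m2 \<in> E" using AE m1s m2s unfolding A_def by auto
    moreover have "Ki m1 \<noteq> Ki m2" using Ki(2)[OF seg_props(1)[OF m1s]] Ki(2)[OF seg_props(1)[OF m2s]] m12
      by metis
    ultimately show "\<exists>a\<in>E. \<exists>b\<in>E. a \<noteq> b" by blast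
    fix E' assume E': "E \<subseteq> E' \<and> E' \<subseteq> bdF F \<and> connected E' \<and> geodesic_subset E'"
    then obtain M where M: "M \<in> SL2" "E' \<subseteq> geodesic_line M" unfolding geodesic_subset_def by blast
    have detM: "det M = 1" using M(1) by (simp add: SL2_def)
    have onM: "aff M (K z) = 0" and zU: "Im z > 0" if "z \<in> E'" for z
    proof -
      have "z \<in> geodesic_line M" using M(2) that by auto
      hence zz: "Im z > 0" "Re (mob M z) = 0" unfolding geodesic_line_def UHP_def by auto
      show "Im z > 0" by (rule zz(1))
      show "aff M (K z) = 0" using zz Re_sign(2)[OF detM zz(1)] aff_sign(2)[OF zz(1)] by simp
    qed
    have a1: "aff M m1 = 0" using onM[of "Ki m1"] Ki(2)[OF seg_props(1)[OF m1s]] AE m1s E'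
      unfolding A_def by auto
    have a2: "aff M m2 = 0" using onM[of "Ki m2"] Ki(2)[OF seg_props(1)[OF m2s]] AE m2s E'
      unfolding A_def by auto
    have "E' \<subseteq> bdF F \<inter> geodesic_line \<sigma>"
    proof
      fix z assume z: "z \<in> E'"
      have "aff \<sigma> (K z) = 0"
        by (rule aff_line[OF detM m12 a1 a2 onM[OF z] seg_props(3)[OF m1s] seg_props(3)[OF m2s]])
      hence "Re (mob \<sigma> z) = 0" using Re_sign(2)[OF dets zU[OF z]] aff_sign(2)[OF zU[OF z]] by simp
      thus "z \<in> bdF F \<inter> geodesic_line \<sigma>" using z E' zU[OF z]
        unfolding geodesic_line_def UHP_def by auto
    qed
    moreover have "x0 \<in> E'" using x0A AE E' by auto
    ultimately have "E' \<subseteq> E" unfolding E_def using E' by (intro connected_component_maximal) auto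
    thus "E' = E" using E' by auto
  qed
  show False using edges edge z0 z1 z0E z1E by blast
qed

end
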